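(* Let $d$ and $n$ be odd positive integers such that $n \ge \max\{5(d+1)/2,\ 2d+7\}$. Then there are spherical 3-designs of size $n$ on $S^d$.
   Context: $S^d$ is the unit sphere in $\mathbb{R}^{d+1}$. A spherical $t$-design of size $n$ on $S^d$ is a collection $X$ of $n$ points of $S^d$ such that for every polynomial of degree at most $t$ its average over $S^d$ (surface measure) equals $\frac1{|X|}\sum_{x\in X}f(x)$. *)

theory Defs
  imports "HOL-Analysis.Analysis"
begin

text \<open>Points of R^(d+1) are vectors real^'n with CARD('n) = d+1; S^d is sphere 0 1.\<close>

definition poly_deg_le :: "nat \<Rightarrow> (real^'n \<Rightarrow> real) \<Rightarrow> bool" where
  "poly_deg_le t f \<longleftrightarrow>
     (\<exists>(A :: ('n \<Rightarrow> nat) set) (c :: ('n \<Rightarrow> nat) \<Rightarrow> real).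
        finite A \<and> (\<forall>a\<in>A. sum a UNIV \<le> t) \<and>
        f = (\<lambda>x. \<Sum>a\<in>A. c a * (\<Prod>i\<in>UNIV. (x $ i) ^ (a i))))"

text \<open>Average of f over the unit sphere w.r.t. normalized surface measure,
  realized as the (normalized) cone measure: average of f(x/|x|) over the unit ball.\<close>
definition sphere_avg :: "(real^'n \<Rightarrow> real) \<Rightarrow> real" where
  "sphere_avg f = integral (ball 0 1) (\<lambda>x. f (x /\<^sub>R norm x)) / measure lebesgue (ball (0::real^'n) 1)"

definition spherical_design :: "nat \<Rightarrow> (real^'n) set \<Rightarrow> bool" where
  "spherical_design t X \<longleftrightarrow>
     finite X \<and> X \<noteq> {} \<and> X \<subseteq> sphere 0 1 \<and>
     (\<forall>f. poly_deg_le t f \<longrightarrow> (\<Sum>x\<in>X. f x) / real (card X) = sphere_avg f)"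

end

theory Submission
  imports Defs "HOL-Analysis.Analysis"
begin

lemma sum_cis_zero:
  fixes N :: nat and p :: int
  assumes "N > 0" "\<not> int N dvd p"
  shows "(\<Sum>j<N. cis (2*pi*p*j/N + \<phi>)) = 0"
proof -
  define \<omega> where "\<omega> = cis (2*pi*p/N)"
  have w1: "\<omega> \<noteq> 1"
  proof
    assume "\<omega> = 1"
    then obtain k :: int where "2*pi*p/N = k * 2 * pi"
      by (auto simp: \<omega>_def complex_eq_iff cos_one_2pi_int)
    then have "real_of_int p = real N * k" using assms(1) by (simp add: field_simps)
    then have "p = int N * k" by (metis of_int_eq_iff of_int_mult of_int_of_nat_eq)
    then show False using assms(2) by simp
  qed
  have wN: "\<omega> ^ N = 1"
  proof -
    have "\<omega> ^ N = cis (real N * (2*pi*p/N))" unfolding \<omega>_def by (rule Complex.DeMoivre)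
    also have "real N * (2*pi*p/N) = 2*pi*p" using assms(1) by simp
    then have "cis (real N * (2*pi*p/N)) = cis (2*pi*p)" by simp
    also have "\<dots> = 1" by (simp add: complex_eq_iff cos_one_2pi_int)
    finally show ?thesis .
  qed
  have "(\<Sum>j<N. cis (2*pi*p*j/N + \<phi>)) = (\<Sum>j<N. cis \<phi> * \<omega> ^ j)"
    by (intro sum.cong refl) (simp add: \<omega>_def Complex.DeMoivre cis_mult algebra_simps)
  also have "\<dots> = cis \<phi> * ((\<omega> ^ N - 1) / (\<omega> - 1))"
    by (simp add: sum_distrib_left[symmetric] geometric_sum w1)
  also have "\<dots> = 0" by (simp add: wN)
  finally show ?thesis .
qed

lemma sum_cos_zero:
  fixes N :: nat and p :: int
  assumes "N > 0" "\<not> int N dvd p"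
  shows "(\<Sum>j<N. cos (2*pi*p*j/N + \<phi>)) = 0" "(\<Sum>j<N. sin (2*pi*p*j/N + \<phi>)) = 0"
proof -
  have "Re (\<Sum>j<N. cis (2*pi*p*j/N + \<phi>)) = 0" "Im (\<Sum>j<N. cis (2*pi*p*j/N + \<phi>)) = 0"
    using sum_cis_zero[OF assms] by auto
  then show "(\<Sum>j<N. cos (2*pi*p*j/N + \<phi>)) = 0" "(\<Sum>j<N. sin (2*pi*p*j/N + \<phi>)) = 0"
    by simp_all
qed


lemma int_sph:
  fixes G :: "real^'n \<Rightarrow> real"
  assumes G: "continuous_on UNIV G"
  shows "(\<lambda>x. G (x /\<^sub>R norm x)) absolutely_integrable_on ball 0 1"
proof -
  have "compact (G ` cball 0 1)"
    by (intro compact_continuous_image continuous_on_subset[OF G]) auto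
  then obtain B where B: "\<And>y. y \<in> cball 0 1 \<Longrightarrow> norm (G y) \<le> B"
    by (meson bounded_iff compact_imp_bounded imageI)
  have Gm: "G \<in> borel_measurable borel"
    using G by (simp add: borel_measurable_continuous_onI)
  have m: "(\<lambda>x. G (x /\<^sub>R norm x)) \<in> borel_measurable borel"
  proof -
    have "(\<lambda>x. G (sgn x)) \<in> borel_measurable borel"
      using Gm by measurable
    then show ?thesis by (simp add: sgn_div_norm)
  qed
  have m2: "(\<lambda>x. G (x /\<^sub>R norm x)) \<in> borel_measurable (lebesgue_on (ball 0 1))"
    using measurable_comp[OF id_borel_measurable_lebesgue_on m] by (simp add: o_def)
  show ?thesis
  proof (rule measurable_bounded_by_integrable_imp_absolutely_integrable[OF m2])
    show "ball 0 1 \<in> sets lebesgue" by simp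
    show "(\<lambda>x. B) integrable_on ball 0 1" by (rule integrable_on_const) simp
    fix x :: "real^'n" assume "x \<in> ball 0 1"
    have "x /\<^sub>R norm x \<in> cball 0 1"
      by (cases "x = 0") auto
    then show "norm (G (x /\<^sub>R norm x)) \<le> B" using B by blast
  qed
qed

lemma int_sph':
  fixes G :: "real^'n \<Rightarrow> real"
  assumes G: "continuous_on UNIV G"
  shows "(\<lambda>x. G (x /\<^sub>R norm x)) integrable_on ball 0 1"
  by (rule set_lebesgue_integral_eq_integral(1)[OF int_sph[OF G]])


definition spm :: "('n \<Rightarrow> 'n) \<Rightarrow> ('n \<Rightarrow> real) \<Rightarrow> real^'n \<Rightarrow> real^'n" where
  "spm \<sigma> s x = (\<chi> k. s k * x $ \<sigma> k)"

locale sperm =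
  fixes \<sigma> :: "'n::finite \<Rightarrow> 'n" and s :: "'n \<Rightarrow> real"
  assumes inv: "\<And>k. \<sigma> (\<sigma> k) = k"
    and sgn: "\<And>k. s k = 1 \<or> s k = -1"
    and sinv: "\<And>k. s (\<sigma> k) = s k"
begin

abbreviation "g \<equiv> spm \<sigma> s"

lemma ss: "s k * s k = 1" using sgn[of k] by auto

lemma gg: "g (g x) = x"
  by (simp add: spm_def vec_eq_iff inv sinv mult.assoc[symmetric] ss)

lemma g_scale: "g (c *\<^sub>R x) = c *\<^sub>R g x"
  by (simp add: spm_def vec_eq_iff)

lemma lin: "linear g"
  by (rule linearI) (simp_all add: spm_def vec_eq_iff algebra_simps)

lemma bij_sigma: "bij \<sigma>"
  by (metis bij_betw_byWitness inv subset_UNIV surj_def)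

lemma norm_g: "norm (g x) = norm x"
proof -
  have "(\<Sum>k\<in>UNIV. (norm (g x $ k))\<^sup>2) = (\<Sum>k\<in>UNIV. (norm (x $ \<sigma> k))\<^sup>2)"
    by (intro sum.cong refl) (simp add: spm_def abs_mult power_mult_distrib, metis ss abs_mult abs_1 power2_eq_square abs_mult_self_eq)
  also have "\<dots> = (\<Sum>k\<in>UNIV. (norm (x $ k))\<^sup>2)"
    using sum.reindex[of \<sigma> UNIV "\<lambda>k. (norm (x $ k))\<^sup>2"] bij_sigma
    by (simp add: bij_def)
  finally show ?thesis by (simp add: norm_vec_def L2_set_def)
qed

definition lo :: "real^'n \<Rightarrow> real^'n \<Rightarrow> real^'n" where
  "lo u v = (\<chi> k. if s k = 1 then u $ \<sigma> k else - (v $ \<sigma> k))"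
definition hi :: "real^'n \<Rightarrow> real^'n \<Rightarrow> real^'n" where
  "hi u v = (\<chi> k. if s k = 1 then v $ \<sigma> k else - (u $ \<sigma> k))"

lemma mem_img: "y \<in> g ` A \<longleftrightarrow> g y \<in> A"
  by (metis gg image_iff)

lemma img_box: "g ` cbox u v = cbox (lo u v) (hi u v)"
proof -
  have "g y \<in> cbox u v \<longleftrightarrow> y \<in> cbox (lo u v) (hi u v)" for y
  proof -
    have "g y \<in> cbox u v \<longleftrightarrow> (\<forall>k. u$k \<le> s k * y $ \<sigma> k \<and> s k * y $ \<sigma> k \<le> v$k)"
      by (simp add: mem_box_cart spm_def)
    also have "\<dots> \<longleftrightarrow> (\<forall>k. u$(\<sigma> k) \<le> s k * y $ k \<and> s k * y $ k \<le> v$(\<sigma> k))"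
      by (metis inv sinv)
    also have "\<dots> \<longleftrightarrow> (\<forall>k. lo u v $ k \<le> y $ k \<and> y $ k \<le> hi u v $ k)"
      apply (simp add: lo_def hi_def)
      apply (intro iff_allI)
      subgoal for k using sgn[of k] by auto
      done
    finally show ?thesis by (simp add: mem_box_cart)
  qed
  then show ?thesis using mem_img by blast
qed

lemma content_img: "Henstock_Kurzweil_Integration.content (g ` cbox u v) = 1 * Henstock_Kurzweil_Integration.content (cbox u v)"
proof -
  have e: "cbox (lo u v) (hi u v) = {} \<longleftrightarrow> cbox u v = {}"
    by (metis img_box image_is_empty)
  have "(\<Prod>k\<in>UNIV. hi u v $ k - lo u v $ k) = (\<Prod>k\<in>UNIV. v $ \<sigma> k - u $ \<sigma> k)"
    by (intro prod.cong refl) (auto simp: hi_def lo_def)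
  also have "\<dots> = (\<Prod>k\<in>UNIV. v $ k - u $ k)"
    using prod.reindex[of \<sigma> UNIV "\<lambda>k. v $ k - u $ k"] bij_sigma
    by (simp add: bij_def)
  finally show ?thesis
    by (simp add: img_box e content_cbox_if_cart)
qed

lemma inv_ball:
  fixes F :: "real^'n \<Rightarrow> real"
  assumes "F integrable_on ball 0 1"
  shows "integral (ball 0 1) (\<lambda>x. F (g x)) = integral (ball 0 1) F"
proof -
  define a :: "real^'n" where "a = (\<chi> k. -1)"
  define b :: "real^'n" where "b = (\<chi> k. 1)"
  have sub: "ball 0 1 \<subseteq> cbox a b"
  proof
    fix x :: "real^'n" assume "x \<in> ball 0 1"
    then have "norm x < 1" by simp
    then show "x \<in> cbox a b"
      using component_le_norm_cart[of x] by (auto simp: mem_box_cart a_def b_def abs_le_iff) (smt (verit) component_le_norm_cart abs_le_iff)+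
  qed
  have "(F has_integral integral (ball 0 1) F) (ball 0 1)" using assms by blast
  then have h1: "((\<lambda>x. if x \<in> ball 0 1 then F x else 0) has_integral integral (ball 0 1) F) (cbox a b)"
    by (rule iffD2[OF has_integral_restrict[OF sub]])
  have "((\<lambda>x. (\<lambda>x. if x \<in> ball 0 1 then F x else 0) (g x)) has_integral (1/1) *\<^sub>R integral (ball 0 1) F) (g ` cbox a b)"
  proof (rule has_integral_twiddle[where g=g and h=g, OF _ gg gg _ _ _ _ h1])
    show "\<And>x. continuous (at x) g" using lin linear_continuous_at linear_linear by blast
    show "\<And>u v. \<exists>w z. g ` cbox u v = cbox w z" using img_box by blast
    show "\<And>u v. \<exists>w z. g ` cbox u v = cbox w z" using img_box by blast
    show "\<And>u v. Henstock_Kurzweil_Integration.content (g ` cbox u v) = 1 * Henstock_Kurzweil_Integration.content (cbox u v)" by (rule content_img)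
  qed simp
  moreover have "g ` cbox a b = cbox a b"
  proof -
    have "lo a b = a" "hi a b = b" by (auto simp: lo_def hi_def a_def b_def vec_eq_iff)
    then show ?thesis by (simp add: img_box)
  qed
  ultimately have "((\<lambda>x. if x \<in> ball 0 1 then F (g x) else 0) has_integral integral (ball 0 1) F) (cbox a b)"
    by (simp add: norm_g del: has_integral_restrict)
  then have "((\<lambda>x. F (g x)) has_integral integral (ball 0 1) F) (ball 0 1)"
    by (rule iffD1[OF has_integral_restrict[OF sub]])
  then show ?thesis by blast
qed

end


definition rfl :: "'n \<Rightarrow> real^'n \<Rightarrow> real^'n" where
  "rfl p = spm id (\<lambda>k. if k = p then -1 else 1)"

definition swp :: "'n \<Rightarrow> 'n \<Rightarrow> real^'n \<Rightarrow> real^'n" where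
  "swp i j = spm (\<lambda>k. if k = i then j else if k = j then i else k) (\<lambda>k. 1)"

lemma sperm_rfl: "sperm id (\<lambda>k. if k = (p::'n::finite) then -1 else 1)"
  by unfold_locales auto

lemma sperm_swp: "sperm (\<lambda>k. if k = i then j else if k = j then i else (k::'n::finite)) (\<lambda>k. 1)"
  by unfold_locales auto

lemma rfl_nth: "rfl p x $ k = (if k = p then - x $ k else x $ k)"
  by (simp add: rfl_def spm_def)

lemma swp_nth: "swp i j x $ k = x $ (if k = i then j else if k = j then i else k)"
  by (simp add: swp_def spm_def)

lemma odd_int_zero:
  fixes G :: "real^'n::finite \<Rightarrow> real"
  assumes G: "continuous_on UNIV G" and odd: "\<And>y. G (rfl p y) = - G y"
  shows "integral (ball 0 1) (\<lambda>x. G (x /\<^sub>R norm x)) = 0"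
proof -
  interpret sperm id "\<lambda>k. if k = p then -1 else 1" by (rule sperm_rfl)
  have I: "(\<lambda>x. G (x /\<^sub>R norm x)) integrable_on ball 0 1"
    by (rule int_sph'[OF G])
  have "integral (ball 0 1) (\<lambda>x. G (x /\<^sub>R norm x)) = integral (ball 0 1) (\<lambda>x. (\<lambda>x. G (x /\<^sub>R norm x)) (rfl p x))"
    using inv_ball[OF I] by (simp add: rfl_def)
  also have "\<dots> = integral (ball 0 1) (\<lambda>x. - G (x /\<^sub>R norm x))"
  proof (intro integral_cong)
    fix x :: "real^'n"
    have "rfl p x /\<^sub>R norm (rfl p x) = rfl p (x /\<^sub>R norm x)"
      using g_scale[of "inverse (norm x)" x] norm_g[of x] by (simp add: rfl_def)
    then show "G (rfl p x /\<^sub>R norm (rfl p x)) = - G (x /\<^sub>R norm x)" by (simp add: odd)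
  qed
  also have "\<dots> = - integral (ball 0 1) (\<lambda>x. G (x /\<^sub>R norm x))"
    by (simp add: integral_neg I)
  finally show ?thesis by simp
qed

lemma cont_comp: "continuous_on UNIV (\<lambda>y::real^'n. (y $ i) ^ 2)"
  by (intro continuous_intros)

lemma sq_int_eq:
  fixes i j :: "'n::finite"
  shows "integral (ball 0 1) (\<lambda>x::real^'n. ((x /\<^sub>R norm x) $ i) ^ 2) = integral (ball 0 1) (\<lambda>x::real^'n. ((x /\<^sub>R norm x) $ j) ^ 2)"
proof -
  interpret sperm "\<lambda>k. if k = i then j else if k = j then i else k" "\<lambda>k. 1" by (rule sperm_swp)
  have I: "(\<lambda>x::real^'n. ((x /\<^sub>R norm x) $ i) ^ 2) integrable_on ball 0 1"
    using int_sph'[OF cont_comp[of i]] by (simp del: vector_scaleR_component)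
  have "integral (ball 0 1) (\<lambda>x::real^'n. ((x /\<^sub>R norm x) $ i) ^ 2) = integral (ball 0 1) (\<lambda>x::real^'n. (\<lambda>x. ((x /\<^sub>R norm x) $ i) ^ 2) (swp i j x))"
    using inv_ball[OF I] by (simp add: swp_def)
  also have "\<dots> = integral (ball 0 1) (\<lambda>x::real^'n. ((x /\<^sub>R norm x) $ j) ^ 2)"
  proof (intro integral_cong)
    fix x :: "real^'n"
    have "swp i j x /\<^sub>R norm (swp i j x) = swp i j (x /\<^sub>R norm x)"
      using g_scale[of "inverse (norm x)" x] norm_g[of x] by (simp add: swp_def)
    then show "((swp i j x /\<^sub>R norm (swp i j x)) $ i) ^ 2 = ((x /\<^sub>R norm x) $ j) ^ 2"
      by (simp add: swp_nth)
  qed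
  finally show ?thesis .
qed

lemma sum_sq_norm: "(\<Sum>i\<in>UNIV. ((x::real^'n::finite) $ i) ^ 2) = (norm x) ^ 2"
  by (simp add: norm_vec_def L2_set_def sum_nonneg)

lemma sq_int:
  fixes i :: "'n::finite"
  shows "integral (ball 0 1) (\<lambda>x::real^'n. ((x /\<^sub>R norm x) $ i) ^ 2) = measure lebesgue (ball (0::real^'n) 1) / CARD('n)"
proof -
  let ?K = "integral (ball 0 1) (\<lambda>x::real^'n. ((x /\<^sub>R norm x) $ i) ^ 2)"
  have I: "\<And>j. (\<lambda>x. ((x /\<^sub>R norm x) $ j) ^ 2) integrable_on ball (0::real^'n) 1"
    by (rule int_sph'[OF cont_comp])
  have "integral (ball (0::real^'n) 1) (\<lambda>x. \<Sum>j\<in>UNIV. ((x /\<^sub>R norm x) $ j) ^ 2) = (\<Sum>j\<in>UNIV. integral (ball (0::real^'n) 1) (\<lambda>x. ((x /\<^sub>R norm x) $ j) ^ 2))"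
    using integral_sum[of UNIV "\<lambda>j x. ((x /\<^sub>R norm x) $ j) ^ 2" "ball (0::real^'n) 1"] I by simp
  also have "\<dots> = (\<Sum>j\<in>(UNIV::'n set). ?K)"
    by (rule sum.cong[OF refl]) (rule sq_int_eq)
  also have "\<dots> = CARD('n) * ?K" by simp
  finally have e1: "integral (ball (0::real^'n) 1) (\<lambda>x. \<Sum>j\<in>UNIV. ((x /\<^sub>R norm x) $ j) ^ 2) = CARD('n) * ?K" .
  have "integral (ball (0::real^'n) 1) (\<lambda>x. \<Sum>j\<in>UNIV. ((x /\<^sub>R norm x) $ j) ^ 2) = integral (ball (0::real^'n) 1) (\<lambda>x. 1)"
  proof (rule integral_spike[of "{0}"])
    show "negligible {0::real^'n}" by simp
    fix x :: "real^'n" assume "x \<in> ball 0 1 - {0}"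
    then have "x \<noteq> 0" by simp
    have "(\<Sum>j\<in>UNIV. ((x /\<^sub>R norm x) $ j) ^ 2) = (norm (x /\<^sub>R norm x)) ^ 2"
      by (rule sum_sq_norm)
    also have "\<dots> = 1" using \<open>x \<noteq> 0\<close> by simp
    finally show "1 = (\<Sum>j\<in>UNIV. ((x /\<^sub>R norm x) $ j) ^ 2)" by simp
  qed
  also have "\<dots> = measure lebesgue (ball (0::real^'n) 1)"
    by (rule lmeasure_integral[symmetric]) simp
  finally show ?thesis using e1 by (simp add: field_simps)
qed


lemma trigP:
  fixes P :: int and N :: nat
  assumes "P \<noteq> 0" "\<bar>P\<bar> < int N"
  shows "(\<Sum>j<N. cos (pi * (2 * P) * (2 * real j + 1) / (2 * real N))) = 0"
    "(\<Sum>j<N. sin (pi * (2 * P) * (2 * real j + 1) / (2 * real N))) = 0"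
proof -
  have N0: "N > 0" using assms by linarith
  have nd: "\<not> int N dvd P"
    using dvd_imp_le_int[OF assms(1)] assms(2) by force
  have e: "pi * (2 * P) * (2 * real j + 1) / (2 * real N) = 2*pi*P*j/N + pi*P/N" for j
    using N0 by (simp add: field_simps)
  show "(\<Sum>j<N. cos (pi * (2 * P) * (2 * real j + 1) / (2 * real N))) = 0"
    "(\<Sum>j<N. sin (pi * (2 * P) * (2 * real j + 1) / (2 * real N))) = 0"
    unfolding e using sum_cos_zero[OF N0 nd] by simp_all
qed

lemma pent_trig:
  fixes p :: int
  assumes "0 < p" "p < 5"
  shows "(\<Sum>k<5::nat. cos (p * (2*pi*real k/5))) = 0" "(\<Sum>k<5::nat. sin (p * (2*pi*real k/5))) = 0"
proof -
  have nd: "\<not> int 5 dvd p" using assms zdvd_imp_le by fastforce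
  have e: "p * (2*pi*real k/5) = 2*pi*p*k/real (5::nat) + 0" for k by simp
  show "(\<Sum>k<5::nat. cos (p * (2*pi*real k/5))) = 0" "(\<Sum>k<5::nat. sin (p * (2*pi*real k/5))) = 0"
    unfolding e using sum_cos_zero[OF _ nd, of 0] by simp_all
qed

lemma sin3: "sin (x::real) ^ 3 = (3 * sin x - sin (3 * x)) / 4"
proof -
  have e: "3*x = 2*x + x" by simp
  have "sin (3 * x) = sin (2*x) * cos x + cos (2*x) * sin x"
    by (subst e) (rule sin_add)
  also have "\<dots> = 2 * sin x * (cos x)\<^sup>2 + (1 - 2 * (sin x)\<^sup>2) * sin x"
    by (simp add: sin_double cos_double_sin power2_eq_square)
  also have "\<dots> = 3 * sin x - 4 * sin x ^ 3"
  proof -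
    have c2: "(cos x)\<^sup>2 = 1 - (sin x)\<^sup>2" by (simp add: cos_squared_eq)
    show ?thesis unfolding c2 by (simp add: power2_eq_square power3_eq_cube algebra_simps)
  qed
  finally show ?thesis by simp
qed

lemma cos3: "cos (x::real) ^ 3 = (3 * cos x + cos (3 * x)) / 4"
  using cos_treble_cos[of x] by simp

locale cfg =
  fixes r N :: nat and \<tau> :: real
  assumes r1: "r \<ge> 1" and N2: "N \<ge> 2 * r" and Nt: "real N = r * \<tau> - 5/2" and t52: "\<tau> \<ge> 5/2"
begin

definition qr :: "nat \<Rightarrow> real" where "qr s = 2 * real r - 2 * real s - 1"
definition th :: "nat \<Rightarrow> nat \<Rightarrow> real" where "th s j = pi * qr s * (2 * real j + 1) / (2 * real N)"
definition rho :: "nat \<Rightarrow> real" where "rho s = sqrt (if s = 0 then (\<tau> - 5/2) / N else \<tau> / N)"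
definition frm :: "nat \<Rightarrow> nat \<Rightarrow> real" where
  "frm j c = rho (c div 2) * (if even c then cos (th (c div 2) j) else sin (th (c div 2) j))"
definition al :: "nat \<Rightarrow> real" where "al k = 2 * pi * real k / 5"
definition pnt :: "nat \<Rightarrow> nat \<Rightarrow> real" where
  "pnt k c = (if c = 0 then cos (al k) else if c = 1 then sin (al k) else 0)"

lemma N0: "N > 0" using r1 N2 by linarith

lemma sum_plus: assumes "s < r" "t < r"
  shows "(\<Sum>j<N. cos (th s j + th t j)) = 0" "(\<Sum>j<N. sin (th s j + th t j)) = 0"
proof -
  define P :: int where "P = 2 * int r - int s - int t - 1"
  have P: "P \<noteq> 0" "\<bar>P\<bar> < int N" using assms N2 by (auto simp: P_def)
  have e: "th s j + th t j = pi * (2 * P) * (2 * real j + 1) / (2 * real N)" for j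
    using assms by (simp add: th_def qr_def P_def add_divide_distrib[symmetric] algebra_simps of_nat_diff)
  show "(\<Sum>j<N. cos (th s j + th t j)) = 0" "(\<Sum>j<N. sin (th s j + th t j)) = 0"
    unfolding e using trigP[OF P] by simp_all
qed

lemma sum_minus: assumes "s < r" "t < r" "s \<noteq> t"
  shows "(\<Sum>j<N. cos (th s j - th t j)) = 0" "(\<Sum>j<N. sin (th s j - th t j)) = 0"
proof -
  define P :: int where "P = int t - int s"
  have P: "P \<noteq> 0" "\<bar>P\<bar> < int N" using assms N2 by (auto simp: P_def)
  have e: "th s j - th t j = pi * (2 * P) * (2 * real j + 1) / (2 * real N)" for j
    using assms by (simp add: th_def qr_def P_def diff_divide_distrib[symmetric] algebra_simps)
  show "(\<Sum>j<N. cos (th s j - th t j)) = 0" "(\<Sum>j<N. sin (th s j - th t j)) = 0"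
    unfolding e using trigP[OF P] by simp_all
qed

lemma cc: assumes "s < r" "t < r"
  shows "(\<Sum>j<N. cos (th s j) * cos (th t j)) = (if s = t then N / 2 else 0)"
proof -
  have "(\<Sum>j<N. cos (th s j) * cos (th t j)) = (\<Sum>j<N. cos (th s j - th t j)) / 2 + (\<Sum>j<N. cos (th s j + th t j)) / 2"
    by (simp add: cos_times_cos sum_divide_distrib[symmetric] sum.distrib add_divide_distrib)
  then show ?thesis using sum_plus[OF assms] sum_minus[OF assms] by auto
qed

lemma ss: assumes "s < r" "t < r"
  shows "(\<Sum>j<N. sin (th s j) * sin (th t j)) = (if s = t then N / 2 else 0)"
proof -
  have "(\<Sum>j<N. sin (th s j) * sin (th t j)) = (\<Sum>j<N. cos (th s j - th t j)) / 2 - (\<Sum>j<N. cos (th s j + th t j)) / 2"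
    by (simp add: sin_times_sin sum_divide_distrib[symmetric] sum_subtractf diff_divide_distrib)
  then show ?thesis using sum_plus[OF assms] sum_minus[OF assms] by auto
qed

lemma cs: assumes "s < r" "t < r"
  shows "(\<Sum>j<N. cos (th s j) * sin (th t j)) = 0"
proof -
  have "(\<Sum>j<N. cos (th s j) * sin (th t j)) = (\<Sum>j<N. sin (th s j + th t j)) / 2 - (\<Sum>j<N. sin (th s j - th t j)) / 2"
    by (simp add: cos_times_sin sum_divide_distrib[symmetric] sum_subtractf diff_divide_distrib)
  then show ?thesis using sum_plus[OF assms] sum_minus[OF assms] by (cases "s = t") auto
qed

lemma frm2: assumes "a < 2 * r" "b < 2 * r"
  shows "(\<Sum>j<N. frm j a * frm j b) = (if a = b then (rho (a div 2))\<^sup>2 * N / 2 else 0)"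
proof -
  have s: "a div 2 < r" "b div 2 < r" using assms by auto
  have "(\<Sum>j<N. frm j a * frm j b) = rho (a div 2) * rho (b div 2) *
     (\<Sum>j<N. (if even a then cos (th (a div 2) j) else sin (th (a div 2) j)) * (if even b then cos (th (b div 2) j) else sin (th (b div 2) j)))"
    by (simp add: frm_def sum_distrib_left algebra_simps)
  also have "\<dots> = (if a = b then (rho (a div 2))\<^sup>2 * N / 2 else 0)"
  proof (cases "a div 2 = b div 2")
    case True
    show ?thesis
    proof (cases "even a = even b")
      case True2: True
      then have "a = b" using True by (metis dvd_mult_div_cancel odd_two_times_div_two_succ)
      then show ?thesis using cc[OF s] ss[OF s] by (cases "even b") (auto simp: power2_eq_square)
    next
      case False
      then have "a \<noteq> b" by auto
      moreover have "(\<Sum>j<N. sin (th (b div 2) j) * cos (th (b div 2) j)) = 0"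
        using cs[OF s(2) s(2)] by (simp add: mult.commute)
      ultimately show ?thesis using False True cs[OF s] by auto
    qed
  next
    case False
    then have "a \<noteq> b" by auto
    moreover have "(\<Sum>j<N. sin (th (a div 2) j) * cos (th (b div 2) j)) = 0"
      using cs[OF s(2) s(1)] by (simp add: mult.commute)
    ultimately show ?thesis using False cc[OF s] ss[OF s] cs[OF s] by (cases "even a"; cases "even b") auto
  qed
  finally show ?thesis .
qed

end


lemma sum2: "(\<Sum>c<2*r. g c) = (\<Sum>i<r. g (2*i) + g (Suc (2*i)))"
  by (induction r) (simp_all add: algebra_simps)

context cfg begin

lemma rho2: "(rho s)\<^sup>2 = (if s = 0 then (\<tau> - 5/2) / N else \<tau> / N)"
  unfolding rho_def using t52 N0 by (simp add: real_sqrt_pow2 divide_nonneg_nonneg)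

lemma frm_norm: "(\<Sum>c<2*r. (frm j c)\<^sup>2) = 1"
proof -
  have "(\<Sum>c<2*r. (frm j c)\<^sup>2) = (\<Sum>s<r. (rho s)\<^sup>2)"
    unfolding sum2 by (intro sum.cong refl) (simp add: frm_def power_mult_distrib algebra_simps sin_squared_eq)
  also have "\<dots> = (\<tau> - 5/2) / N + (r - 1) * (\<tau> / N)"
  proof -
    obtain r' where r': "r = Suc r'" using r1 by (cases r) auto
    show ?thesis unfolding r' sum.lessThan_Suc_shift by (simp add: rho2)
  qed
  also have "\<dots> = 1" using Nt N0 r1 by (simp add: field_simps of_nat_diff)
  finally show ?thesis .
qed

lemma pnt_norm: "k < 5 \<Longrightarrow> (\<Sum>c<2*r. (pnt k c)\<^sup>2) = 1"
proof -
  obtain r' where r': "r = Suc r'" using r1 by (cases r) auto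
  have "(\<Sum>c<2*r. (pnt k c)\<^sup>2) = (\<Sum>i<r. (pnt k (2*i))\<^sup>2 + (pnt k (Suc (2*i)))\<^sup>2)" by (rule sum2)
  also have "\<dots> = (pnt k 0)\<^sup>2 + (pnt k 1)\<^sup>2"
    unfolding r' sum.lessThan_Suc_shift by (simp add: pnt_def)
  also have "\<dots> = 1" by (simp add: pnt_def)
  finally show "(\<Sum>c<2*r. (pnt k c)\<^sup>2) = 1" .
qed

lemma P1: "(\<Sum>k<5. cos (al k)) = 0" "(\<Sum>k<5. sin (al k)) = 0"
  using pent_trig[of 1] by (simp_all add: al_def)

lemma P2': "(\<Sum>k<5. cos (2 * al k)) = 0" "(\<Sum>k<5. sin (2 * al k)) = 0"
  using pent_trig[of 2] by (simp_all add: al_def)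

lemma P3': "(\<Sum>k<5. cos (3 * al k)) = 0" "(\<Sum>k<5. sin (3 * al k)) = 0"
  using pent_trig[of 3] by (simp_all add: al_def)

lemma P2: "(\<Sum>k<5. cos (al k) * cos (al k)) = 5/2" "(\<Sum>k<5. sin (al k) * sin (al k)) = 5/2"
  "(\<Sum>k<5. cos (al k) * sin (al k)) = 0" "(\<Sum>k<5. sin (al k) * cos (al k)) = 0"
proof -
  have a: "cos x * cos x = (1 + cos (2*x)) / 2" for x :: real by (simp add: cos_double_cos power2_eq_square)
  have b: "sin x * sin x = (1 - cos (2*x)) / 2" for x :: real by (simp add: cos_double_sin power2_eq_square)
  have c: "cos x * sin x = sin (2*x) / 2" for x :: real by (simp add: sin_double)
  show "(\<Sum>k<5. cos (al k) * cos (al k)) = 5/2" unfolding a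
    using P2' by (simp add: sum_divide_distrib[symmetric] sum.distrib)
  show "(\<Sum>k<5. sin (al k) * sin (al k)) = 5/2" unfolding b
    using P2' by (simp add: sum_divide_distrib[symmetric] sum_subtractf)
  show "(\<Sum>k<5. cos (al k) * sin (al k)) = 0" unfolding c
    using P2' by (simp add: sum_divide_distrib[symmetric])
  then show "(\<Sum>k<5. sin (al k) * cos (al k)) = 0" by (simp add: mult.commute)
qed

lemma P3: "(\<Sum>k<5. cos (al k) ^ 3) = 0" "(\<Sum>k<5. sin (al k) ^ 3) = 0"
  "(\<Sum>k<5. cos (al k) ^ 2 * sin (al k)) = 0" "(\<Sum>k<5. cos (al k) * sin (al k) ^ 2) = 0"
proof -
  show c3: "(\<Sum>k<5. cos (al k) ^ 3) = 0" unfolding cos3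
    using P1 P3' by (simp add: sum_divide_distrib[symmetric] sum.distrib sum_distrib_left[symmetric])
  show s3: "(\<Sum>k<5. sin (al k) ^ 3) = 0" unfolding sin3
    using P1 P3' by (simp add: sum_divide_distrib[symmetric] sum_subtractf sum_distrib_left[symmetric])
  have "(\<Sum>k<5. cos (al k) ^ 2 * sin (al k)) = (\<Sum>k<5. sin (al k) - sin (al k) ^ 3)"
    by (intro sum.cong refl) (unfold cos_squared_eq, simp add: algebra_simps power3_eq_cube power2_eq_square)
  also have "\<dots> = (\<Sum>k<5. sin (al k)) - (\<Sum>k<5. sin (al k) ^ 3)" by (rule sum_subtractf)
  finally have "(\<Sum>k<5. cos (al k) ^ 2 * sin (al k)) = (\<Sum>k<5. sin (al k)) - (\<Sum>k<5. sin (al k) ^ 3)" .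
  then show "(\<Sum>k<5. cos (al k) ^ 2 * sin (al k)) = 0" using P1 s3 by simp
  have "(\<Sum>k<5. cos (al k) * sin (al k) ^ 2) = (\<Sum>k<5. cos (al k) - cos (al k) ^ 3)"
    by (intro sum.cong refl) (unfold sin_squared_eq, simp add: algebra_simps power3_eq_cube power2_eq_square)
  also have "\<dots> = (\<Sum>k<5. cos (al k)) - (\<Sum>k<5. cos (al k) ^ 3)" by (rule sum_subtractf)
  finally have "(\<Sum>k<5. cos (al k) * sin (al k) ^ 2) = (\<Sum>k<5. cos (al k)) - (\<Sum>k<5. cos (al k) ^ 3)" .
  then show "(\<Sum>k<5. cos (al k) * sin (al k) ^ 2) = 0" using P1 c3 by simp
qed

lemma pm1: "(\<Sum>k<5. pnt k a) = 0"
  using P1 by (cases "a = 0"; cases "a = 1") (simp_all add: pnt_def)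

lemma pm2: "(\<Sum>k<5. pnt k a * pnt k b) = (if a = b \<and> a < 2 then 5/2 else 0)"
  using P2 by (cases "a = 0"; cases "a = 1"; cases "b = 0"; cases "b = 1") (simp_all add: pnt_def)

lemma pm3: "(\<Sum>k<5. pnt k a * pnt k b * pnt k c) = 0"
proof -
  have e: "(\<Sum>k<5. cos (al k) * cos (al k) * cos (al k)) = 0"
     "(\<Sum>k<5. sin (al k) * sin (al k) * sin (al k)) = 0"
     "(\<Sum>k<5. cos (al k) * cos (al k) * sin (al k)) = 0"
     "(\<Sum>k<5. cos (al k) * sin (al k) * cos (al k)) = 0"
     "(\<Sum>k<5. sin (al k) * cos (al k) * cos (al k)) = 0"
     "(\<Sum>k<5. cos (al k) * sin (al k) * sin (al k)) = 0"
     "(\<Sum>k<5. sin (al k) * cos (al k) * sin (al k)) = 0"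
     "(\<Sum>k<5. sin (al k) * sin (al k) * cos (al k)) = 0"
    using P3 by (simp_all add: power3_eq_cube power2_eq_square mult_ac)
  show ?thesis
    using e by (cases "a = 0"; cases "a = 1"; cases "b = 0"; cases "b = 1"; cases "c = 0"; cases "c = 1")
      (simp_all add: pnt_def)
qed

end


context cfg begin

definition "tt = r - 1"

lemma tt_lt: "tt < r" using r1 by (simp add: tt_def)

lemma th_tt: "th tt j = pi * (2 * real j + 1) / (2 * real N)"
  using r1 by (simp add: th_def qr_def tt_def of_nat_diff)

lemma th_tt_range: assumes "j < N" shows "0 < th tt j" "th tt j < pi"
proof -
  have "2 * real j + 1 < 2 * real N" using assms by simp
  then have "(2 * real j + 1) / (2 * real N) < 1" using N0 by simp
  then have "pi * ((2 * real j + 1) / (2 * real N)) < pi * 1" by (intro mult_strict_left_mono) auto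
  then show "th tt j < pi" by (simp add: th_tt)
  show "0 < th tt j" using N0 by (simp add: th_tt)
qed

lemma rho_tt: "rho tt > 0"
proof (cases "tt = 0")
  case True
  then have "r = 1" using r1 by (simp add: tt_def)
  then have "\<tau> - 5/2 = N" using Nt by simp
  then show ?thesis using True N0 by (simp add: rho_def)
next
  case False
  then show ?thesis using t52 N0 by (simp add: rho_def)
qed

lemma c0: "2 * tt < 2 * r" "Suc (2 * tt) < 2 * r" using tt_lt by auto

lemma frm_c0: "frm j (2 * tt) = rho tt * cos (th tt j)"
  by (simp add: frm_def)
lemma frm_c1: "frm j (Suc (2 * tt)) = rho tt * sin (th tt j)"
  by (simp add: frm_def)

lemma frm_inj: assumes "j < N" "j' < N" "\<forall>c<2*r. frm j c = frm j' c" shows "j = j'"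
proof -
  have "rho tt * cos (th tt j) = rho tt * cos (th tt j')"
    using assms(3) c0 by (metis frm_c0)
  then have "cos (th tt j) = cos (th tt j')" using rho_tt by simp
  then have "th tt j = th tt j'"
    using cos_inj_pi th_tt_range[OF assms(1)] th_tt_range[OF assms(2)] by (meson less_imp_le)
  then show ?thesis using N0 by (simp add: th_tt)
qed

lemma frm_neg: assumes "j < N" "j' < N" shows "\<not> (\<forall>c<2*r. frm j c = - frm j' c)"
proof
  assume "\<forall>c<2*r. frm j c = - frm j' c"
  then have "rho tt * sin (th tt j) = - (rho tt * sin (th tt j'))"
    using c0 by (metis frm_c1)
  moreover have "sin (th tt j) > 0" "sin (th tt j') > 0"
    using sin_gt_zero th_tt_range assms by auto
  ultimately show False using rho_tt
    by (smt (verit) mult_pos_pos)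
qed

lemma pnt_inj: assumes "k < 5" "k' < 5" "\<forall>c<2*r. pnt k c = pnt k' c" shows "k = k'"
proof -
  have "0 < 2 * r" using r1 by simp
  moreover have "1 < 2 * r" using r1 by simp
  ultimately have "cos (al k) = cos (al k')" "sin (al k) = sin (al k')"
    using assms(3) by (auto simp: pnt_def dest: spec[of _ 0] spec[of _ 1])
  then obtain n :: int where "al k = al k' + 2 * pi * n" using sin_cos_eq_iff by metis
  then have h: "pi * (real k * 2) = pi * (real k' * 2) + pi * (real_of_int n * 10)" by (simp add: al_def field_simps)
  then have "pi * (real k - real k' - 5 * n) = 0" by (simp add: algebra_simps)
  then have "real k = real k' + 5 * n" by simp
  then have "real_of_int (int k) = real_of_int (int k' + 5 * n)" by simp
  then have "int k = int k' + 5 * n" by (simp only: of_int_eq_iff)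
  then show ?thesis using assms(1,2) by presburger
qed

lemma pnt_frm: assumes "k < 5" "j < N"
  shows "\<not> (\<forall>c<2*r. pnt k c = frm j c)" "\<not> (\<forall>c<2*r. pnt k c = - frm j c)"
proof -
  have s: "sin (th tt j) > 0" using sin_gt_zero th_tt_range assms by auto
  have "\<not> (\<forall>c<2*r. pnt k c = frm j c) \<and> \<not> (\<forall>c<2*r. pnt k c = - frm j c)"
  proof (cases "r = 1")
    case False
    then have "Suc (2 * tt) \<noteq> 0" "Suc (2 * tt) \<noteq> 1" using r1 by (auto simp: tt_def)
    then have "pnt k (Suc (2 * tt)) = 0" by (simp add: pnt_def)
    moreover have "frm j (Suc (2 * tt)) \<noteq> 0" using s rho_tt by (simp add: frm_c1)
    ultimately show ?thesis using c0 by force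
  next
    case True
    then have tt0: "tt = 0" unfolding tt_def by simp
    have rho1: "rho 0 = 1"
    proof -
      have "\<tau> - 5/2 = N" using Nt True by simp
      then show ?thesis using N0 by (simp add: rho_def)
    qed
    have f0: "frm j 0 = cos (th 0 j)" "frm j 1 = sin (th 0 j)"
      using frm_c0[of j] frm_c1[of j] by (simp_all add: tt0 rho1)
    have p0: "pnt k 0 = cos (al k)" "pnt k 1 = sin (al k)" by (simp_all add: pnt_def)
    have lt: "0 < 2 * r" "1 < 2 * r" using True by auto
    have thj: "th 0 j = pi * (2 * real j + 1) / (2 * real N)" using th_tt tt0 by simp
    have A: False if "al k = th 0 j + e * pi + 2 * pi * n" "e = 0 \<or> e = 1" for n :: int and e :: nat
    proof -
      have "2 * pi * real k / 5 = pi * (2 * real j + 1) / (2 * real N) + e * pi + 2 * pi * n"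
        using that thj by (simp add: al_def)
      moreover have "pi * ((2 * real j + 1) / (2 * real N) + e + 2 * n) = pi * (2 * real j + 1) / (2 * real N) + e * pi + 2 * pi * n"
        by (simp add: algebra_simps)
      moreover have "pi * (2 * real k / 5) = 2 * pi * real k / 5" by simp
      ultimately have "pi * (2 * real k / 5) = pi * ((2 * real j + 1) / (2 * real N) + e + 2 * n)"
        by simp
      then have "2 * real k / 5 = (2 * real j + 1) / (2 * real N) + e + 2 * n"
        using pi_neq_zero mult_left_cancel by blast
      then have "4 * real k * N = 5 * (2 * real j + 1) + 10 * e * N + 20 * n * N"
        using N0 by (simp add: field_simps)
      then have "real_of_int (4 * int k * N) = real_of_int (5 * (2 * int j + 1) + 10 * e * N + 20 * n * N)"
        by simp
      then have "4 * int k * N = 5 * (2 * int j + 1) + 10 * e * N + 20 * n * N"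
        by (simp only: of_int_eq_iff)
      moreover have "odd (5 * (2 * int j + 1) + 10 * e * N + 20 * n * N)" by simp
      moreover have "even (4 * int k * N)" by simp
      ultimately show False by metis
    qed
    show ?thesis
    proof (intro conjI notI)
      assume "\<forall>c<2*r. pnt k c = frm j c"
      then have "cos (al k) = cos (th 0 j)" "sin (al k) = sin (th 0 j)"
        using lt p0 f0 by metis+
      then obtain n :: int where "al k = th 0 j + 2 * pi * n" using sin_cos_eq_iff by metis
      then show False using A[of 0 n] by simp
    next
      assume "\<forall>c<2*r. pnt k c = - frm j c"
      then have "cos (al k) = cos (th 0 j + pi)" "sin (al k) = sin (th 0 j + pi)"
        using lt p0 f0 by (metis cos_periodic_pi sin_periodic_pi)+
      then obtain n :: int where "al k = th 0 j + pi + 2 * pi * n" using sin_cos_eq_iff by metis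
      then show False using A[of 1 n] by simp
    qed
  qed
  then show "\<not> (\<forall>c<2*r. pnt k c = frm j c)" "\<not> (\<forall>c<2*r. pnt k c = - frm j c)" by auto
qed

end


definition mnm :: "('n \<Rightarrow> nat) \<Rightarrow> real^'n \<Rightarrow> real" where
  "mnm a x = (\<Prod>i\<in>UNIV. (x $ i) ^ (a i))"

lemma mono_step:
  fixes a :: "'n::finite \<Rightarrow> nat"
  assumes "sum a UNIV = Suc k"
  shows "\<exists>i b. sum b UNIV = k \<and> mnm a = (\<lambda>x. x $ i * mnm b x)"
proof -
  obtain i where i: "a i \<noteq> 0"
    using assms by (metis Suc_neq_Zero sum.neutral)
  define b where "b = a(i := a i - 1)"
  have "sum a UNIV = a i + sum a (UNIV - {i})" by (simp add: sum.remove)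
  moreover have "sum b UNIV = b i + sum b (UNIV - {i})" by (simp add: sum.remove)
  moreover have "sum b (UNIV - {i}) = sum a (UNIV - {i})" by (intro sum.cong) (auto simp: b_def)
  ultimately have "sum b UNIV = k" using assms i by (simp add: b_def)
  moreover have "mnm a = (\<lambda>x. x $ i * mnm b x)"
  proof
    fix x :: "real^'n"
    have "mnm a x = (x $ i) ^ (a i) * (\<Prod>j\<in>UNIV - {i}. (x $ j) ^ (a j))"
      by (simp add: mnm_def prod.remove)
    moreover have "mnm b x = (x $ i) ^ (b i) * (\<Prod>j\<in>UNIV - {i}. (x $ j) ^ (b j))"
      by (simp add: mnm_def prod.remove)
    moreover have "(\<Prod>j\<in>UNIV - {i}. (x $ j) ^ (b j)) = (\<Prod>j\<in>UNIV - {i}. (x $ j) ^ (a j))"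
      by (intro prod.cong) (auto simp: b_def)
    moreover have "b i = a i - 1" by (simp add: b_def)
    moreover have "(x $ i) ^ (a i) = x $ i * (x $ i) ^ (a i - 1)"
      using i by (cases "a i") simp_all
    ultimately show "mnm a x = x $ i * mnm b x" by simp
  qed
  ultimately show ?thesis by blast
qed

lemma mono_zero:
  fixes a :: "'n::finite \<Rightarrow> nat"
  assumes "sum a UNIV = 0" shows "mnm a = (\<lambda>x. 1)"
  using assms by (simp add: mnm_def fun_eq_iff)

lemma mono_dec:
  fixes a :: "'n::finite \<Rightarrow> nat"
  assumes "sum a UNIV \<le> 3"
  shows "mnm a = (\<lambda>x. 1) \<or> (\<exists>i. mnm a = (\<lambda>x. x $ i)) \<or> (\<exists>i j. mnm a = (\<lambda>x. x $ i * x $ j))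
     \<or> (\<exists>i j k. mnm a = (\<lambda>x. x $ i * x $ j * x $ k))"
proof -
  have "sum a UNIV = 0 \<or> sum a UNIV = Suc 0 \<or> sum a UNIV = Suc (Suc 0) \<or> sum a UNIV = Suc (Suc (Suc 0))"
    using assms by linarith
  then show ?thesis
  proof (elim disjE)
    assume "sum a UNIV = 0" then show ?thesis using mono_zero by blast
  next
    assume "sum a UNIV = Suc 0"
    then obtain i b where "sum b UNIV = 0" "mnm a = (\<lambda>x. x $ i * mnm b x)" using mono_step by blast
    then show ?thesis using mono_zero[of b] by auto
  next
    assume "sum a UNIV = Suc (Suc 0)"
    then obtain i b where b: "sum b UNIV = Suc 0" "mnm a = (\<lambda>x. x $ i * mnm b x)" using mono_step by blast
    then obtain j c where "sum c UNIV = 0" "mnm b = (\<lambda>x. x $ j * mnm c x)" using mono_step by blast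
    then show ?thesis using mono_zero[of c] b by auto
  next
    assume "sum a UNIV = Suc (Suc (Suc 0))"
    then obtain i b where b: "sum b UNIV = Suc (Suc 0)" "mnm a = (\<lambda>x. x $ i * mnm b x)" using mono_step by blast
    then obtain j c where c: "sum c UNIV = Suc 0" "mnm b = (\<lambda>x. x $ j * mnm c x)" using mono_step by blast
    then obtain k e where "sum e UNIV = 0" "mnm c = (\<lambda>x. x $ k * mnm e x)" using mono_step by blast
    then have "mnm a = (\<lambda>x. x $ i * x $ j * x $ k)" using mono_zero[of e] b c by (auto simp: fun_eq_iff mult.assoc)
    then show ?thesis by blast
  qed
qed

lemma mono_cont: "continuous_on UNIV (mnm a)"
  unfolding mnm_def by (intro continuous_intros)

lemma ball_meas: "measure lebesgue (ball (0::real^'n::finite) 1) \<noteq> 0"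
  by simp

lemma avg_lin:
  fixes g :: "'a \<Rightarrow> real^'n::finite \<Rightarrow> real"
  assumes "finite A" "\<And>a. a \<in> A \<Longrightarrow> continuous_on UNIV (g a)"
  shows "sphere_avg (\<lambda>x. \<Sum>a\<in>A. c a * g a x) = (\<Sum>a\<in>A. c a * sphere_avg (g a))"
proof -
  have I: "(\<lambda>x. g a (x /\<^sub>R norm x)) integrable_on ball 0 1" if "a \<in> A" for a
    by (rule int_sph'[OF assms(2)[OF that]])
  have "integral (ball 0 1) (\<lambda>x. \<Sum>a\<in>A. c a * g a (x /\<^sub>R norm x)) = (\<Sum>a\<in>A. integral (ball 0 1) (\<lambda>x. c a * g a (x /\<^sub>R norm x)))"
  proof (rule integral_sum[OF assms(1)])
    fix a assume "a \<in> A"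
    show "(\<lambda>x. c a * g a (x /\<^sub>R norm x)) integrable_on ball 0 1"
      using integrable_cmul[OF I[OF \<open>a \<in> A\<close>], of "c a"] by simp
  qed
  also have "\<dots> = (\<Sum>a\<in>A. c a * integral (ball 0 1) (\<lambda>x. g a (x /\<^sub>R norm x)))"
    by (intro sum.cong refl) simp
  finally show ?thesis unfolding sphere_avg_def by (simp add: sum_divide_distrib)
qed

lemma SA0: "sphere_avg (\<lambda>x::real^'n::finite. 1) = 1"
proof -
  have "integral (ball (0::real^'n) 1) (\<lambda>x. 1) = measure lebesgue (ball (0::real^'n) 1)"
    by (rule lmeasure_integral[symmetric]) simp
  then show ?thesis unfolding sphere_avg_def using ball_meas[where 'n='n] by simp
qed

lemma SA_odd:
  fixes G :: "real^'n::finite \<Rightarrow> real"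
  assumes "continuous_on UNIV G" "\<And>y. G (rfl p y) = - G y"
  shows "sphere_avg G = 0"
  unfolding sphere_avg_def using odd_int_zero[OF assms] by simp

lemma SA1: "sphere_avg (\<lambda>x::real^'n::finite. x $ i) = 0"
proof (rule SA_odd[where p=i])
  show "continuous_on UNIV (\<lambda>x::real^'n. x $ i)" by (intro continuous_intros)
qed (simp add: rfl_nth)

lemma SA2: "sphere_avg (\<lambda>x::real^'n::finite. x $ i * x $ j) = (if i = j then 1 / CARD('n) else 0)"
proof (cases "i = j")
  case True
  have "sphere_avg (\<lambda>x::real^'n::finite. x $ i * x $ j) =
    integral (ball 0 1) (\<lambda>x::real^'n. ((x /\<^sub>R norm x) $ i) ^ 2) / measure lebesgue (ball (0::real^'n) 1)"
    unfolding sphere_avg_def True by (simp add: power2_eq_square)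
  also have "\<dots> = 1 / CARD('n)" unfolding sq_int using ball_meas[where 'n='n] by simp
  finally show ?thesis using True by simp
next
  case False
  have "sphere_avg (\<lambda>x::real^'n::finite. x $ i * x $ j) = 0"
  proof (rule SA_odd[where p=i])
    show "continuous_on UNIV (\<lambda>x::real^'n. x $ i * x $ j)" by (intro continuous_intros)
  qed (use False in \<open>simp add: rfl_nth\<close>)
  then show ?thesis using False by simp
qed

lemma SA3: "sphere_avg (\<lambda>x::real^'n::finite. x $ i * x $ j * x $ k) = 0"
proof -
  define p where "p = (if i = j then k else if i = k then j else i)"
  show ?thesis
  proof (rule SA_odd[where p=p])
    show "continuous_on UNIV (\<lambda>x::real^'n. x $ i * x $ j * x $ k)" by (intro continuous_intros)
  qed (auto simp: rfl_nth p_def)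
qed


theorem proposition6p2:
  fixes d n :: nat
  assumes "odd d" and "odd n"
    and "real n \<ge> max (5 * (real d + 1) / 2) (2 * real d + 7)"
    and "CARD('n::finite) = d + 1"
  shows "\<exists>X :: (real^'n) set. spherical_design 3 X \<and> card X = n"
proof -
  define r where "r = (d + 1) div 2"
  have m: "CARD('n) = 2 * r" using assms(1,4) by (simp add: r_def)
  have "CARD('n) > 0" by simp
  then have r1: "r \<ge> 1" using m by linarith
  have h1: "real n \<ge> 5 * (real d + 1) / 2" and h2: "real n \<ge> 2 * real d + 7" using assms(3) by auto
  have dr: "d + 1 = 2 * r" using assms(4) m by simp
  have n5: "n \<ge> 5 * r" using h1 dr by (simp add: field_simps)
  have n4: "n \<ge> 4 * r + 5" using h2 dr by linarith
  define N where "N = (n - 5) div 2"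
  have nN: "n = 2 * N + 5" using assms(2) n4 by (simp add: N_def)
  have N2: "N \<ge> 2 * r" using n4 nN by linarith
  define \<tau> :: real where "\<tau> = real n / real (2 * r)"
  have Nt: "real N = r * \<tau> - 5/2" using r1 nN by (simp add: \<tau>_def field_simps)
  have t52: "\<tau> \<ge> 5/2" using n5 r1 by (simp add: \<tau>_def field_simps)
  interpret C: cfg r N \<tau> using r1 N2 Nt t52 by unfold_locales auto
  obtain e :: "'n \<Rightarrow> nat" where e: "bij_betw e UNIV {0..<2*r}"
    using ex_bij_betw_finite_nat[of "UNIV::'n set"] m by auto
  have e_lt: "e i < 2 * r" for i using e by (auto simp: bij_betw_def)
  have e_surj: "\<exists>i. e i = c" if "c < 2 * r" for c
  proof -
    have "c \<in> e ` UNIV" using that bij_betw_imp_surj_on[OF e] by simp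
    then show ?thesis by blast
  qed
  have e_inj: "e i = e i' \<longleftrightarrow> i = i'" for i i' using e by (auto simp: bij_betw_def inj_on_def)
  define vv :: "(nat \<Rightarrow> real) \<Rightarrow> real^'n" where "vv F = (\<chi> i. F (e i))" for F
  have vv_nth: "vv F $ i = F (e i)" for F i by (simp add: vv_def)
  have vv_eq: "vv F = vv G \<longleftrightarrow> (\<forall>c<2*r. F c = G c)" for F G
    by (auto simp: vec_eq_iff vv_nth e_lt dest!: e_surj)
  have vv_neg: "- vv F = vv (\<lambda>c. - F c)" for F by (simp add: vec_eq_iff vv_nth)
  have norm_vv: "norm (vv F) = sqrt (\<Sum>c<2*r. (F c)\<^sup>2)" for F
  proof -
    have "(\<Sum>i\<in>UNIV. (F (e i))\<^sup>2) = (\<Sum>c\<in>{0..<2*r}. (F c)\<^sup>2)"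
      by (rule sum.reindex_bij_betw[OF e])
    then show ?thesis by (simp add: norm_vec_def L2_set_def vv_nth lessThan_atLeast0)
  qed
  define P where "P k = vv (C.pnt k)" for k
  define Fp where "Fp j = vv (C.frm j)" for j
  define Fm where "Fm j = - vv (C.frm j)" for j
  have Fm': "Fm j = vv (\<lambda>c. - C.frm j c)" for j by (simp add: Fm_def vv_neg)
  define A where "A = P ` {..<5}"
  define B where "B = Fp ` {..<N}"
  define D where "D = Fm ` {..<N}"
  define X where "X = A \<union> (B \<union> D)"
  have iP: "inj_on P {..<5}" by (auto simp: inj_on_def P_def vv_eq intro: C.pnt_inj)
  have iFp: "inj_on Fp {..<N}" by (auto simp: inj_on_def Fp_def vv_eq intro: C.frm_inj)
  have iFm: "inj_on Fm {..<N}"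
  proof (rule inj_onI)
    fix j j' assume "j \<in> {..<N}" "j' \<in> {..<N}" "Fm j = Fm j'"
    then show "j = j'" by (auto simp: Fm_def vv_eq intro: C.frm_inj)
  qed
  have dAB: "A \<inter> (B \<union> D) = {}"
    using C.pnt_frm by (auto simp: A_def B_def D_def P_def Fp_def Fm' vv_eq; blast)
  have dBD: "B \<inter> D = {}"
    using C.frm_neg by (auto simp: B_def D_def Fp_def Fm' vv_eq; blast)
  have fin: "finite A" "finite B" "finite D" by (simp_all add: A_def B_def D_def)
  have sumX: "(\<Sum>x\<in>X. h x) = (\<Sum>k<5. h (P k)) + ((\<Sum>j<N. h (Fp j)) + (\<Sum>j<N. h (Fm j)))" for h
  proof -
    have "(\<Sum>x\<in>X. h x) = (\<Sum>x\<in>A. h x) + ((\<Sum>x\<in>B. h x) + (\<Sum>x\<in>D. h x))"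
      unfolding X_def using fin dAB dBD by (simp add: sum.union_disjoint)
    then show ?thesis unfolding A_def B_def D_def
      by (simp only: sum.reindex[OF iP] sum.reindex[OF iFp] sum.reindex[OF iFm] o_def)
  qed
  have cardX: "card X = n"
  proof -
    have "card X = card A + (card B + card D)"
      unfolding X_def using fin dAB dBD by (simp add: card_Un_disjoint)
    also have "\<dots> = 5 + (N + N)"
      unfolding A_def B_def D_def by (simp add: card_image iP iFp iFm)
    finally show ?thesis using nN by simp
  qed
  have sph: "X \<subseteq> sphere 0 1"
  proof -
    have "norm (P k) = 1" if "k < 5" for k
      unfolding P_def norm_vv using C.pnt_norm[OF that] by simp
    moreover have "norm (Fp j) = 1" for j
      unfolding Fp_def norm_vv using C.frm_norm by simp
    moreover have "norm (Fm j) = 1" for j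
      unfolding Fm_def norm_minus_cancel norm_vv using C.frm_norm by simp
    ultimately show ?thesis by (auto simp: X_def A_def B_def D_def)
  qed
  have "P 0 \<in> X" by (simp add: X_def A_def)
  then have ne: "X \<noteq> {}" by blast
  have finX: "finite X" using fin by (simp add: X_def)
  have rho_eq: "(C.rho (c div 2))\<^sup>2 * N = (if c < 2 then \<tau> - 5/2 else \<tau>)" for c
  proof -
    have "c div 2 = 0 \<longleftrightarrow> c < 2" by auto
    then show ?thesis using C.N0 by (simp add: C.rho2)
  qed
  have FS1: "(\<Sum>x\<in>X. x $ i) = 0" for i
    unfolding sumX using C.pm1 by (simp add: P_def Fp_def Fm_def vv_nth sum_negf)
  have FS2: "(\<Sum>x\<in>X. x $ i * x $ i') = (if i = i' then \<tau> else 0)" for i i'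
  proof -
    have "(\<Sum>x\<in>X. x $ i * x $ i') = (\<Sum>k<5. C.pnt k (e i) * C.pnt k (e i')) + 2 * (\<Sum>j<N. C.frm j (e i) * C.frm j (e i'))"
      unfolding sumX by (simp add: P_def Fp_def Fm_def vv_nth)
    also have "\<dots> = (if i = i' then \<tau> else 0)"
      unfolding C.pm2 C.frm2[OF e_lt e_lt] e_inj using rho_eq[of "e i"] by auto
    finally show ?thesis .
  qed
  have FS3: "(\<Sum>x\<in>X. x $ i * x $ i' * x $ i'') = 0" for i i' i''
    unfolding sumX using C.pm3 by (simp add: P_def Fp_def Fm_def vv_nth sum_negf)
  have FS0: "(\<Sum>x\<in>X. 1) = real n" using cardX by simp
  have n0: "real n > 0" using nN by simp
  have G: "(\<Sum>x\<in>X. mnm a x) / real (card X) = sphere_avg (mnm a)" if "sum a UNIV \<le> 3" for a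
  proof -
    from mono_dec[OF that] show ?thesis
    proof (elim disjE exE)
      assume "mnm a = (\<lambda>x. 1)" then show ?thesis using FS0 cardX n0 SA0 by simp
    next
      fix i assume "mnm a = (\<lambda>x. x $ i)" then show ?thesis using FS1 SA1 by simp
    next
      fix i j assume "mnm a = (\<lambda>x. x $ i * x $ j)" then show ?thesis
        using FS2 SA2[of i j] cardX n0 m by (simp add: \<tau>_def)
    next
      fix i j k assume "mnm a = (\<lambda>x. x $ i * x $ j * x $ k)" then show ?thesis using FS3 SA3 by simp
    qed
  qed
  have "spherical_design 3 X"
    unfolding spherical_design_def
  proof (intro conjI allI impI finX ne sph)
    fix f :: "real^'n \<Rightarrow> real"
    assume "poly_deg_le 3 f"
    then obtain Aa c where Aa: "finite Aa" "\<forall>a\<in>Aa. sum a UNIV \<le> 3"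
      and f: "f = (\<lambda>x. \<Sum>a\<in>Aa. c a * mnm a x)"
      unfolding poly_deg_le_def mnm_def by blast
    have "(\<Sum>x\<in>X. f x) / real (card X) = (\<Sum>a\<in>Aa. c a * ((\<Sum>x\<in>X. mnm a x) / real (card X)))"
      unfolding f by (simp add: sum.swap[of _ X] sum_distrib_left sum_divide_distrib)
    also have "\<dots> = (\<Sum>a\<in>Aa. c a * sphere_avg (mnm a))"
      using G Aa(2) by simp
    also have "\<dots> = sphere_avg f"
      unfolding f by (rule avg_lin[symmetric]) (use Aa mono_cont in auto)
    finally show "(\<Sum>x\<in>X. f x) / real (card X) = sphere_avg f" .
  qed
  then show ?thesis using cardX by blast
qed

end
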